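(* Suppose all distributions are Gaussian with a common known variance $\sigma^2>0$, i.e. $\nu_{a,i}=\mathcal N(\mu_{a,i},\sigma^2)$, let $\boldsymbol\mu\in\mathcal L$ and assume $\boldsymbol\beta\neq0$. Let \[ (u_0^\star,\dots,u_K^\star)\in\operatorname*{argmax}_{\mathbf u\in\Sigma_{K+1}}\ \min_{b\in[K]}\ \frac{\Delta_b^2}{2\left(\frac1{u_0}+\frac1{u_b}\right)},\qquad \Delta_b=\mu_0-\mu_b. \] Then the optimal weights for the active mode (maximizers over $\mathcal C_{\mathrm{active}}$ in the definition of $T^\star_{\mathrm{active}}(\boldsymbol\mu)^{-1}$) are given by \[ w^\star_{a,i}=u^\star_a\,\frac{|\beta_i|}{\sum_{j=1}^J|\beta_j|}\qquad\text{for all }a\in\{0,\dots,K\},\ i\le J. \] If in addition $\boldsymbol\alpha=\boldsymbol\beta$, the same weights are optimal for the agnostic and the proportional modes.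
   Context: Arms $a\in\{0,\dots,K\}$ with $K\ge1$ (arm $0$ the control), subpopulations $i\in[J]$, means $\boldsymbol\mu=(\mu_{a,i})$; the KL divergence between $\mathcal N(x,\sigma^2)$ and $\mathcal N(y,\sigma^2)$ is $d(x,y)=(x-y)^2/(2\sigma^2)$. Known $\boldsymbol\beta\in\mathbb R^J$ and $\boldsymbol\alpha\in\Sigma_J$ ($\Sigma_n$ the probability simplex). $\mu_a=\sum_i\beta_i\mu_{a,i}$, $\mathcal S_{\boldsymbol\beta}(\boldsymbol\mu)=\{a\in[K]:\mu_a>\mu_0\}$, $\mathcal L=\{\boldsymbol\mu\in\mathbb R^{(K+1)\times J}:\mu_a\ne\mu_0\ \forall a\in[K]\}$, $\mathrm{Alt}_{\boldsymbol\beta}(\boldsymbol\mu)=\{\boldsymbol\lambda\in\mathcal L:\mathcal S_{\boldsymbol\beta}(\boldsymbol\lambda)\neq\mathcal S_{\boldsymbol\beta}(\boldsymbol\mu)\}$, with $\lambda_a=\sum_i\beta_i\lambda_{a,i}$. For a constraint set $\mathcal C$, $T^\star(\boldsymbol\mu)^{-1}=\sup_{\mathbf w\in\mathcal C}\inf_{\boldsymbol\lambda\in\mathrm{Alt}_{\boldsymbol\beta}(\boldsymbol\mu)}\sum_{a,i}w_{a,i}d(\mu_{a,i},\lambda_{a,i})$; optimal weights are maximizers of this supremum. Active mode: $\mathcal C_{\mathrm{active}}=\Sigma_{(K+1)J}$; proportional: $\mathcal C_{\mathrm{prop}}=\{\mathbf w\in\Sigma_{(K+1)J}:\sum_aw_{a,i}=\alpha_i\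 \forall i\}$; agnostic: $\mathcal C_{\mathrm{agnostic}}=\{\mathbf w:w_{a,i}=\alpha_iu_a,\ \mathbf u\in\Sigma_{K+1}\}$. *)

theory Defs
  imports Complex_Main
begin

(* Arms are indexed by {0..K} (arm 0 = control), subpopulations by {1..J}.
   Mean matrices / weights are functions  nat => nat => real  (arm, subpopulation);
   only the values on {0..K} x {1..J} matter. *)

definition gauss_kl :: "real \<Rightarrow> real \<Rightarrow> real \<Rightarrow> real" where
  "gauss_kl \<sigma> x y = (x - y)^2 / (2 * \<sigma>^2)"

definition arm_mean :: "nat \<Rightarrow> (nat \<Rightarrow> real) \<Rightarrow> (nat \<Rightarrow> nat \<Rightarrow> real) \<Rightarrow> nat \<Rightarrow> real" where
  "arm_mean J \<beta> \<mu> a = (\<Sum>i\<in>{1..J}. \<beta> i * \<mu> a i)"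

definition better_set :: "nat \<Rightarrow> nat \<Rightarrow> (nat \<Rightarrow> real) \<Rightarrow> (nat \<Rightarrow> nat \<Rightarrow> real) \<Rightarrow> nat set" where
  "better_set K J \<beta> \<mu> = {a \<in> {1..K}. arm_mean J \<beta> \<mu> a > arm_mean J \<beta> \<mu> 0}"

definition Lset :: "nat \<Rightarrow> nat \<Rightarrow> (nat \<Rightarrow> real) \<Rightarrow> (nat \<Rightarrow> nat \<Rightarrow> real) set" where
  "Lset K J \<beta> = {\<mu>. \<forall>a\<in>{1..K}. arm_mean J \<beta> \<mu> a \<noteq> arm_mean J \<beta> \<mu> 0}"

definition Alt :: "nat \<Rightarrow> nat \<Rightarrow> (nat \<Rightarrow> real) \<Rightarrow> (nat \<Rightarrow> nat \<Rightarrow> real) \<Rightarrow> (nat \<Rightarrow> nat \<Rightarrow> real) set" where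
  "Alt K J \<beta> \<mu> = {lam \<in> Lset K J \<beta>. better_set K J \<beta> lam \<noteq> better_set K J \<beta> \<mu>}"

definition inner_val :: "real \<Rightarrow> nat \<Rightarrow> nat \<Rightarrow> (nat \<Rightarrow> real) \<Rightarrow> (nat \<Rightarrow> nat \<Rightarrow> real)
    \<Rightarrow> (nat \<Rightarrow> nat \<Rightarrow> real) \<Rightarrow> real" where
  "inner_val \<sigma> K J \<beta> \<mu> w =
     (INF lam\<in>Alt K J \<beta> \<mu>. (\<Sum>a\<in>{0..K}. \<Sum>i\<in>{1..J}. w a i * gauss_kl \<sigma> (\<mu> a i) (lam a i)))"

definition simplex_arms :: "nat \<Rightarrow> (nat \<Rightarrow> real) set" where
  "simplex_arms K = {u. (\<forall>a\<in>{0..K}. u a \<ge> 0) \<and> (\<Sum>a\<in>{0..K}. u a) = 1}"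

definition simplex_pops :: "nat \<Rightarrow> (nat \<Rightarrow> real) set" where
  "simplex_pops J = {v. (\<forall>i\<in>{1..J}. v i \<ge> 0) \<and> (\<Sum>i\<in>{1..J}. v i) = 1}"

definition C_active :: "nat \<Rightarrow> nat \<Rightarrow> (nat \<Rightarrow> nat \<Rightarrow> real) set" where
  "C_active K J = {w. (\<forall>a\<in>{0..K}. \<forall>i\<in>{1..J}. w a i \<ge> 0) \<and>
                      (\<Sum>a\<in>{0..K}. \<Sum>i\<in>{1..J}. w a i) = 1}"

definition C_prop :: "nat \<Rightarrow> nat \<Rightarrow> (nat \<Rightarrow> real) \<Rightarrow> (nat \<Rightarrow> nat \<Rightarrow> real) set" where
  "C_prop K J \<alpha> = {w \<in> C_active K J. \<forall>i\<in>{1..J}. (\<Sum>a\<in>{0..K}. w a i) = \<alpha> i}"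

definition C_agnostic :: "nat \<Rightarrow> nat \<Rightarrow> (nat \<Rightarrow> real) \<Rightarrow> (nat \<Rightarrow> nat \<Rightarrow> real) set" where
  "C_agnostic K J \<alpha> = {w. \<exists>u\<in>simplex_arms K. \<forall>a\<in>{0..K}. \<forall>i\<in>{1..J}. w a i = \<alpha> i * u a}"

definition optimal_weights :: "real \<Rightarrow> nat \<Rightarrow> nat \<Rightarrow> (nat \<Rightarrow> real) \<Rightarrow> (nat \<Rightarrow> nat \<Rightarrow> real)
    \<Rightarrow> (nat \<Rightarrow> nat \<Rightarrow> real) set \<Rightarrow> (nat \<Rightarrow> nat \<Rightarrow> real) \<Rightarrow> bool" where
  "optimal_weights \<sigma> K J \<beta> \<mu> C w \<longleftrightarrow>
     w \<in> C \<and> (\<forall>w'\<in>C. inner_val \<sigma> K J \<beta> \<mu> w' \<le> inner_val \<sigma> K J \<beta> \<mu> w)"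

(* Delta_b^2 / (2 (1/u_0 + 1/u_b)), with the convention 1/0 = +infinity, i.e. value 0
   when u_0 = 0 or u_b = 0 *)
definition pair_term :: "real \<Rightarrow> real \<Rightarrow> real \<Rightarrow> real" where
  "pair_term \<Delta> u0 ub = (if u0 > 0 \<and> ub > 0 then \<Delta>^2 / (2 * (1 / u0 + 1 / ub)) else 0)"

definition u_objective :: "nat \<Rightarrow> nat \<Rightarrow> (nat \<Rightarrow> real) \<Rightarrow> (nat \<Rightarrow> nat \<Rightarrow> real) \<Rightarrow> (nat \<Rightarrow> real) \<Rightarrow> real" where
  "u_objective K J \<beta> \<mu> u =
     Min ((\<lambda>b. pair_term (arm_mean J \<beta> \<mu> 0 - arm_mean J \<beta> \<mu> b) (u 0) (u b)) ` {1..K})"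

end

theory Submission
  imports Defs "HOL-Analysis.Convex"
begin

definition cost :: "real \<Rightarrow> nat \<Rightarrow> nat \<Rightarrow> (nat \<Rightarrow> nat \<Rightarrow> real) \<Rightarrow> (nat \<Rightarrow> nat \<Rightarrow> real) \<Rightarrow> (nat \<Rightarrow> nat \<Rightarrow> real) \<Rightarrow> real" where
  "cost \<sigma> K J w \<mu> lam = (\<Sum>a\<in>{0..K}. \<Sum>i\<in>{1..J}. w a i * gauss_kl \<sigma> (\<mu> a i) (lam a i))"

lemma CS_abs:
  fixes \<beta> x :: "nat \<Rightarrow> real"
  shows "(\<Sum>i\<in>I. \<beta> i * x i)^2 \<le> (\<Sum>i\<in>I. \<bar>\<beta> i\<bar>) * (\<Sum>i\<in>I. \<bar>\<beta> i\<bar> * (x i)^2)"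
proof -
  have "(\<Sum>i\<in>I. (sgn (\<beta> i) * sqrt \<bar>\<beta> i\<bar>) * (sqrt \<bar>\<beta> i\<bar> * x i))^2
     \<le> (\<Sum>i\<in>I. (sgn (\<beta> i) * sqrt \<bar>\<beta> i\<bar>)^2) * (\<Sum>i\<in>I. (sqrt \<bar>\<beta> i\<bar> * x i)^2)"
    by (rule Cauchy_Schwarz_ineq_sum)
  moreover have "\<And>i. (sgn (\<beta> i) * sqrt \<bar>\<beta> i\<bar>) * (sqrt \<bar>\<beta> i\<bar> * x i) = \<beta> i * x i"
  proof -
    fix i
    have "(sgn (\<beta> i) * sqrt \<bar>\<beta> i\<bar>) * (sqrt \<bar>\<beta> i\<bar> * x i) = sgn (\<beta> i) * \<bar>\<beta> i\<bar> * x i"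
      by (simp add: mult.assoc mult.left_commute)
    also have "\<dots> = \<beta> i * x i" by (simp add: sgn_mult_abs)
    finally show "(sgn (\<beta> i) * sqrt \<bar>\<beta> i\<bar>) * (sqrt \<bar>\<beta> i\<bar> * x i) = \<beta> i * x i" .
  qed
  moreover have "\<And>i. (sgn (\<beta> i) * sqrt \<bar>\<beta> i\<bar>)^2 = \<bar>\<beta> i\<bar>"
    by (simp add: power_mult_distrib sgn_if)
  moreover have "\<And>i. (sqrt \<bar>\<beta> i\<bar> * x i)^2 = \<bar>\<beta> i\<bar> * (x i)^2"
    by (simp add: power_mult_distrib)
  ultimately show ?thesis by simp
qed

lemma pair_eq:
  fixes W0 Wb D :: real
  assumes "W0 \<ge> 0" "Wb \<ge> 0"
  shows "((- D * Wb / (W0 + Wb))^2 * W0 + (D + - D * Wb / (W0 + Wb))^2 * Wb) / 2 = pair_term (- D) W0 Wb"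
proof (cases "W0 > 0 \<and> Wb > 0")
  case True
  then have "W0 + Wb > 0" by simp
  define s where "s = W0 + Wb"
  have s: "s > 0" using True s_def by simp
  have q: "D + - D * Wb / s = D * W0 / s" using s unfolding s_def by (simp add: field_simps)
  have "(- D * Wb / s)^2 * W0 + (D * W0 / s)^2 * Wb = D^2 * W0 * Wb * (W0 + Wb) / s^2"
    by (simp add: power2_eq_square field_simps add_divide_distrib[symmetric])
  also have "\<dots> = D^2 * W0 * Wb / s" using s unfolding s_def by (simp add: power2_eq_square)
  finally have e: "(- D * Wb / s)^2 * W0 + (D * W0 / s)^2 * Wb = D^2 * W0 * Wb / s" .
  have "pair_term (- D) W0 Wb = D^2 / (2 * (1/W0 + 1/Wb))" using True unfolding pair_term_def by simp
  also have "\<dots> = D^2 * W0 * Wb / (2 * s)" using True unfolding s_def by (simp add: field_simps)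
  finally show ?thesis using e q unfolding s_def by simp
next
  case False
  then have "W0 = 0 \<or> Wb = 0" using assms by auto
  then show ?thesis using False unfolding pair_term_def by auto
qed

lemma pair_lower:
  fixes u0 ub X Y D :: real
  assumes "u0 > 0" "ub > 0" "(Y - X)^2 \<ge> D^2"
  shows "u0 * X^2 + ub * Y^2 \<ge> 2 * pair_term D u0 ub"
proof -
  have "(u0 + ub) * (u0 * X^2 + ub * Y^2) - u0 * ub * (Y - X)^2 = (u0 * X + ub * Y)^2"
    by (simp add: power2_eq_square algebra_simps)
  then have "(u0 + ub) * (u0 * X^2 + ub * Y^2) \<ge> u0 * ub * (Y - X)^2"
    by (metis diff_ge_0_iff_ge zero_le_power2)
  moreover have "u0 * ub * (Y - X)^2 \<ge> u0 * ub * D^2"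
    using assms by (simp add: mult_left_mono)
  ultimately have h: "(u0 + ub) * (u0 * X^2 + ub * Y^2) \<ge> u0 * ub * D^2" by linarith
  have "2 * pair_term D u0 ub = u0 * ub * D^2 / (u0 + ub)"
    using assms unfolding pair_term_def by (simp add: field_simps)
  also have "\<dots> \<le> u0 * X^2 + ub * Y^2"
    using h assms by (simp add: divide_le_eq mult.commute)
  finally show ?thesis .
qed

lemma am_shift:
  fixes \<beta> :: "nat \<Rightarrow> real"
  assumes S: "(\<Sum>j\<in>{1..J}. \<bar>\<beta> j\<bar>) > 0"
  shows "arm_mean J \<beta> (\<lambda>a i. \<mu> a i + t * (c a * sgn (\<beta> i) / (\<Sum>j\<in>{1..J}. \<bar>\<beta> j\<bar>))) a
       = arm_mean J \<beta> \<mu> a + t * c a"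
proof -
  define S where "S = (\<Sum>j\<in>{1..J}. \<bar>\<beta> j\<bar>)"
  have S0: "S \<noteq> 0" using S S_def by simp
  have "\<And>i. \<beta> i * (\<mu> a i + t * (c a * sgn (\<beta> i) / S)) = \<beta> i * \<mu> a i + (t * c a / S) * \<bar>\<beta> i\<bar>"
    by (simp add: abs_sgn algebra_simps)
  then have "(\<Sum>i\<in>{1..J}. \<beta> i * (\<mu> a i + t * (c a * sgn (\<beta> i) / S)))
      = (\<Sum>i\<in>{1..J}. \<beta> i * \<mu> a i) + (t * c a / S) * S"
    unfolding S_def by (simp add: sum.distrib sum_distrib_left)
  then show ?thesis unfolding arm_mean_def S_def[symmetric] using S0 by simp
qed

lemma alt_construct:
  fixes \<beta> :: "nat \<Rightarrow> real" and w \<mu> :: "nat \<Rightarrow> nat \<Rightarrow> real"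
  assumes sigma: "\<sigma> > 0" and S: "(\<Sum>j\<in>{1..J}. \<bar>\<beta> j\<bar>) > 0"
    and muL: "\<mu> \<in> Lset K J \<beta>" and b: "b \<in> {1..K}"
    and w: "\<forall>a\<in>{0..K}. \<forall>i\<in>{1..J}. w a i \<ge> 0" and e: "\<epsilon> > 0"
  shows "\<exists>lam\<in>Alt K J \<beta> \<mu>. cost \<sigma> K J w \<mu> lam \<le>
     pair_term (arm_mean J \<beta> \<mu> 0 - arm_mean J \<beta> \<mu> b) (\<Sum>i\<in>{1..J}. w 0 i) (\<Sum>i\<in>{1..J}. w b i)
       / (\<sigma>^2 * (\<Sum>j\<in>{1..J}. \<bar>\<beta> j\<bar>)^2) + \<epsilon>"
proof -
  define S where "S = (\<Sum>j\<in>{1..J}. \<bar>\<beta> j\<bar>)"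
  define am where "am = arm_mean J \<beta> \<mu>"
  define W where "W a = (\<Sum>i\<in>{1..J}. w a i)" for a
  define D where "D = am b - am 0"
  define p where "p = - D * W b / (W 0 + W b)"
  define q where "q = D + p"
  have S0: "S > 0" using S S_def by simp
  have W0: "W a \<ge> 0" if "a \<in> {0..K}" for a unfolding W_def using w that by (intro sum_nonneg) auto
  have b0: "b \<noteq> 0" "b \<in> {0..K}" using b by auto
  have D0: "D \<noteq> 0" using muL b unfolding D_def am_def Lset_def by auto
  have pt: "pair_term (am 0 - am b) (W 0) (W b) = (p^2 * W 0 + q^2 * W b) / 2"
    using pair_eq[of "W 0" "W b" D] W0[of 0] W0[of b] b0 unfolding p_def q_def D_def by simp
  define G where "G = pair_term (am 0 - am b) (W 0) (W b) / (\<sigma>^2 * S^2)"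
  have G0: "G \<ge> 0" unfolding G_def pt using W0[of 0] W0[of b] b0 by simp
  have Gp: "G = (p^2 * W 0 + q^2 * W b) / (2 * \<sigma>^2 * S^2)" unfolding G_def pt by simp
  define Bad where "Bad = (\<lambda>a. (am 0 - am a) / p) ` {1..K}"
  define t0 where "t0 = min 2 (1 + \<epsilon> / (3 * G + 1))"
  have t01: "1 < t0" unfolding t0_def using e G0 by simp
  have "infinite ({1<..<t0} - Bad)"
    by (rule Diff_infinite_finite) (use t01 Bad_def in auto)
  then obtain t where t: "t \<in> {1<..<t0}" "t \<notin> Bad"
    using infinite_imp_nonempty by blast
  have t1: "t > 1" and t2: "t < 2" and t3: "t \<le> 1 + \<epsilon> / (3 * G + 1)" using t unfolding t0_def by auto
  have tG: "t^2 * G \<le> G + \<epsilon>"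
  proof -
    have "t^2 * G - G = (t - 1) * ((t + 1) * G)" by (simp add: power2_eq_square algebra_simps)
    also have "\<dots> \<le> (\<epsilon> / (3 * G + 1)) * (3 * G)"
      apply (rule mult_mono) using t1 t2 t3 G0 by (auto intro: mult_right_mono)
    also have "\<dots> \<le> \<epsilon>" using e G0 by (simp add: field_simps)
    finally show ?thesis by simp
  qed
  define c where "c a = (if a = 0 then - p else if a = b then - q else 0)" for a
  define lam where "lam a i = \<mu> a i + t * (c a * sgn (\<beta> i) / S)" for a i
  have aml: "arm_mean J \<beta> lam a = am a + t * c a" for a
    unfolding lam_def S_def am_def by (rule am_shift[OF S])
  have l0: "arm_mean J \<beta> lam 0 = am 0 - t * p" using aml[of 0] c_def by simp
  have lb: "arm_mean J \<beta> lam b = am b - t * q" using aml[of b] c_def b0 by simp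
  have la: "arm_mean J \<beta> lam a = am a" if "a \<noteq> 0" "a \<noteq> b" for a using aml[of a] c_def that by simp
  have diffb: "arm_mean J \<beta> lam b - arm_mean J \<beta> lam 0 = (1 - t) * D"
    using l0 lb unfolding q_def D_def by (simp add: algebra_simps)
  have lamL: "lam \<in> Lset K J \<beta>"
    unfolding Lset_def
  proof (intro CollectI ballI)
    fix a assume a: "a \<in> {1..K}"
    show "arm_mean J \<beta> lam a \<noteq> arm_mean J \<beta> lam 0"
    proof (cases "a = b")
      case True
      then show ?thesis using diffb D0 t1 by auto
    next
      case False
      have mua: "am a \<noteq> am 0" using muL a unfolding Lset_def am_def by auto
      have "am a \<noteq> am 0 - t * p"
      proof
        assume h: "am a = am 0 - t * p"
        show False
        proof (cases "p = 0")
          case True then show False using h mua by simp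
        next
          case False
          then have "t = (am 0 - am a) / p" using h by (simp add: field_simps)
          then have "t \<in> Bad" unfolding Bad_def using a by auto
          then show False using t by simp
        qed
      qed
      then show ?thesis using la[of a] False a l0 by auto
    qed
  qed
  have "b \<in> better_set K J \<beta> lam \<longleftrightarrow> D < 0"
  proof -
    have "arm_mean J \<beta> lam b > arm_mean J \<beta> lam 0 \<longleftrightarrow> (1 - t) * D > 0" using diffb by linarith
    also have "\<dots> \<longleftrightarrow> D < 0" using t1 by (auto simp: zero_less_mult_iff)
    finally show ?thesis unfolding better_set_def using b by auto
  qed
  moreover have "b \<in> better_set K J \<beta> \<mu> \<longleftrightarrow> D > 0"
    unfolding better_set_def D_def am_def using b by auto
  ultimately have "better_set K J \<beta> lam \<noteq> better_set K J \<beta> \<mu>" using D0 by auto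
  then have lamA: "lam \<in> Alt K J \<beta> \<mu>" using lamL unfolding Alt_def by auto
  have termb: "w a i * gauss_kl \<sigma> (\<mu> a i) (lam a i) \<le> (t^2 / (2 * \<sigma>^2 * S^2)) * ((c a)^2 * w a i)"
    if a: "a \<in> {0..K}" and i: "i \<in> {1..J}" for a i
  proof -
    have sg: "(sgn (\<beta> i))^2 \<le> 1" by (simp add: sgn_if)
    have "(\<mu> a i - lam a i)^2 = t^2 * (c a)^2 * (sgn (\<beta> i))^2 / S^2"
      unfolding lam_def by (simp add: power2_eq_square field_simps)
    also have "\<dots> \<le> t^2 * (c a)^2 / S^2"
      using sg S0 by (simp add: divide_right_mono mult_left_le)
    finally have h: "(\<mu> a i - lam a i)^2 \<le> t^2 * (c a)^2 / S^2" .
    have "w a i * gauss_kl \<sigma> (\<mu> a i) (lam a i) = w a i * (\<mu> a i - lam a i)^2 / (2 * \<sigma>^2)"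
      unfolding gauss_kl_def by simp
    also have "\<dots> \<le> w a i * (t^2 * (c a)^2 / S^2) / (2 * \<sigma>^2)"
      using h w a i sigma by (intro divide_right_mono mult_left_mono) auto
    also have "\<dots> = (t^2 / (2 * \<sigma>^2 * S^2)) * ((c a)^2 * w a i)" using S0 sigma by (simp add: field_simps)
    finally show ?thesis .
  qed
  have "cost \<sigma> K J w \<mu> lam \<le> (\<Sum>a\<in>{0..K}. \<Sum>i\<in>{1..J}. (t^2 / (2 * \<sigma>^2 * S^2)) * ((c a)^2 * w a i))"
    unfolding cost_def by (intro sum_mono termb) auto
  also have "\<dots> = (t^2 / (2 * \<sigma>^2 * S^2)) * (\<Sum>a\<in>{0..K}. (c a)^2 * W a)"
    unfolding W_def by (simp add: sum_distrib_left)
  also have "(\<Sum>a\<in>{0..K}. (c a)^2 * W a) = (\<Sum>a\<in>{0..K}. (if a = 0 then p^2 * W 0 else 0) + (if a = b then q^2 * W b else 0))"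
    by (rule sum.cong) (auto simp: c_def b0)
  also have "\<dots> = p^2 * W 0 + q^2 * W b" using b0 by (simp add: sum.distrib)
  also have "(t^2 / (2 * \<sigma>^2 * S^2)) * (p^2 * W 0 + q^2 * W b) = t^2 * G" unfolding Gp by simp
  finally have "cost \<sigma> K J w \<mu> lam \<le> G + \<epsilon>" using tG by linarith
  then show ?thesis using lamA unfolding G_def am_def W_def S_def by blast
qed

lemma block_lower:
  fixes \<beta> :: "nat \<Rightarrow> real" and \<mu> lam :: "nat \<Rightarrow> nat \<Rightarrow> real"
  assumes sigma: "\<sigma> > 0" and S: "(\<Sum>j\<in>{1..J}. \<bar>\<beta> j\<bar>) > 0" and ua: "ua \<ge> 0"
  shows "(\<Sum>i\<in>{1..J}. ua * \<bar>\<beta> i\<bar> / (\<Sum>j\<in>{1..J}. \<bar>\<beta> j\<bar>) * gauss_kl \<sigma> (\<mu> a i) (lam a i))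
     \<ge> ua * (arm_mean J \<beta> lam a - arm_mean J \<beta> \<mu> a)^2 / (2 * \<sigma>^2 * (\<Sum>j\<in>{1..J}. \<bar>\<beta> j\<bar>)^2)"
proof -
  define S where "S = (\<Sum>j\<in>{1..J}. \<bar>\<beta> j\<bar>)"
  have S0: "S > 0" using S S_def by simp
  define x where "x i = lam a i - \<mu> a i" for i
  have X: "arm_mean J \<beta> lam a - arm_mean J \<beta> \<mu> a = (\<Sum>i\<in>{1..J}. \<beta> i * x i)"
    unfolding arm_mean_def x_def by (simp add: sum_subtractf right_diff_distrib)
  have cs: "(\<Sum>i\<in>{1..J}. \<beta> i * x i)^2 \<le> S * (\<Sum>i\<in>{1..J}. \<bar>\<beta> i\<bar> * (x i)^2)"
    unfolding S_def by (rule CS_abs)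
  have "(\<Sum>i\<in>{1..J}. ua * \<bar>\<beta> i\<bar> / S * gauss_kl \<sigma> (\<mu> a i) (lam a i))
      = (ua / (2 * \<sigma>^2 * S)) * (\<Sum>i\<in>{1..J}. \<bar>\<beta> i\<bar> * (x i)^2)"
    unfolding sum_distrib_left gauss_kl_def x_def
    by (rule sum.cong) (auto simp: power2_commute[of "\<mu> a _"] field_simps)
  also have "\<dots> \<ge> (ua / (2 * \<sigma>^2 * S)) * ((\<Sum>i\<in>{1..J}. \<beta> i * x i)^2 / S)"
    using cs S0 sigma ua by (intro mult_left_mono) (auto simp: divide_le_eq mult.commute)
  finally show ?thesis unfolding S_def[symmetric] X using S0 sigma by (simp add: field_simps power2_eq_square)
qed

lemma alt_lower:
  fixes \<beta> u :: "nat \<Rightarrow> real" and \<mu> lam :: "nat \<Rightarrow> nat \<Rightarrow> real"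
  assumes sigma: "\<sigma> > 0" and S: "(\<Sum>j\<in>{1..J}. \<bar>\<beta> j\<bar>) > 0"
    and muL: "\<mu> \<in> Lset K J \<beta>" and lamA: "lam \<in> Alt K J \<beta> \<mu>"
    and u: "\<forall>a\<in>{0..K}. u a \<ge> 0" and u0: "u 0 > 0" and ub: "\<forall>b\<in>{1..K}. u b > 0"
  shows "cost \<sigma> K J (\<lambda>a i. u a * \<bar>\<beta> i\<bar> / (\<Sum>j\<in>{1..J}. \<bar>\<beta> j\<bar>)) \<mu> lam
     \<ge> u_objective K J \<beta> \<mu> u / (\<sigma>^2 * (\<Sum>j\<in>{1..J}. \<bar>\<beta> j\<bar>)^2)"
proof -
  define S where "S = (\<Sum>j\<in>{1..J}. \<bar>\<beta> j\<bar>)"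
  have S0: "S > 0" using S S_def by simp
  define am where "am = arm_mean J \<beta> \<mu>"
  define al where "al = arm_mean J \<beta> lam"
  have lamL: "lam \<in> Lset K J \<beta>" and ne: "better_set K J \<beta> lam \<noteq> better_set K J \<beta> \<mu>"
    using lamA unfolding Alt_def by auto
  have sub: "better_set K J \<beta> lam \<subseteq> {1..K}" "better_set K J \<beta> \<mu> \<subseteq> {1..K}"
    unfolding better_set_def by auto
  obtain b where b: "b \<in> {1..K}" and bd: "(b \<in> better_set K J \<beta> lam) \<noteq> (b \<in> better_set K J \<beta> \<mu>)"
    using ne sub by blast
  have b0: "b \<noteq> 0" "b \<in> {0..K}" using b by auto
  define D where "D = am b - am 0"
  define e where "e = al b - al 0"
  have D0: "D \<noteq> 0" using muL b unfolding D_def am_def Lset_def by auto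
  have e0: "e \<noteq> 0" using lamL b unfolding e_def al_def Lset_def by auto
  have "(e > 0) \<noteq> (D > 0)" using bd b unfolding better_set_def e_def D_def al_def am_def by auto
  then have eD: "e * D < 0" using D0 e0
    by (metis linorder_neqE_linordered_idom mult_neg_pos mult_pos_neg)
  define X where "X = al 0 - am 0"
  define Y where "Y = al b - am b"
  have YX: "Y - X = e - D" unfolding X_def Y_def e_def D_def by simp
  have "(e - D)^2 - D^2 = e^2 - 2 * (e * D)" by (simp add: power2_eq_square algebra_simps)
  then have "(Y - X)^2 \<ge> (am 0 - am b)^2" unfolding YX using eD
    by (simp add: power2_commute[of "am 0"] D_def[symmetric]) (smt (verit) zero_le_power2)
  then have pl: "u 0 * X^2 + u b * Y^2 \<ge> 2 * pair_term (am 0 - am b) (u 0) (u b)"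
    using pair_lower u0 ub b by auto
  define f where "f a = (\<Sum>i\<in>{1..J}. u a * \<bar>\<beta> i\<bar> / S * gauss_kl \<sigma> (\<mu> a i) (lam a i))" for a
  have fnn: "f a \<ge> 0" if "a \<in> {0..K}" for a
    unfolding f_def gauss_kl_def using u that S0 by (intro sum_nonneg) auto
  have f0: "f 0 \<ge> u 0 * X^2 / (2 * \<sigma>^2 * S^2)"
    using block_lower[OF sigma S, where ua="u 0" and a=0 and \<mu>=\<mu> and lam=lam] u0 unfolding f_def S_def X_def al_def am_def by simp
    have ubb: "u b \<ge> 0" using bspec[OF ub b] by simp
  have fb: "f b \<ge> u b * Y^2 / (2 * \<sigma>^2 * S^2)"
    using block_lower[OF sigma S, where ua="u b" and a=b and \<mu>=\<mu> and lam=lam] ubb unfolding f_def S_def Y_def al_def am_def by simp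
  have "cost \<sigma> K J (\<lambda>a i. u a * \<bar>\<beta> i\<bar> / S) \<mu> lam = (\<Sum>a\<in>{0..K}. f a)"
    unfolding cost_def f_def by simp
  also have "(\<Sum>a\<in>{0..K}. f a) \<ge> (\<Sum>a\<in>{0, b}. f a)"
    by (rule sum_mono2) (use fnn b0 in auto)
  also have "(\<Sum>a\<in>{0, b}. f a) = f 0 + f b" using b0 by simp
  finally have c1: "cost \<sigma> K J (\<lambda>a i. u a * \<bar>\<beta> i\<bar> / S) \<mu> lam \<ge> (u 0 * X^2 + u b * Y^2) / (2 * \<sigma>^2 * S^2)"
    using f0 fb by (simp add: add_divide_distrib)
  have "(u 0 * X^2 + u b * Y^2) / (2 * \<sigma>^2 * S^2) \<ge> 2 * pair_term (am 0 - am b) (u 0) (u b) / (2 * \<sigma>^2 * S^2)"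
    using pl S0 sigma by (intro divide_right_mono) auto
  moreover have "u_objective K J \<beta> \<mu> u \<le> pair_term (am 0 - am b) (u 0) (u b)"
    unfolding u_objective_def am_def using b by (intro Min_le) auto
  ultimately have "u_objective K J \<beta> \<mu> u / (\<sigma>^2 * S^2) \<le> (u 0 * X^2 + u b * Y^2) / (2 * \<sigma>^2 * S^2)"
  proof -
    assume h1: "(u 0 * X^2 + u b * Y^2) / (2 * \<sigma>^2 * S^2) \<ge> 2 * pair_term (am 0 - am b) (u 0) (u b) / (2 * \<sigma>^2 * S^2)"
      and h2: "u_objective K J \<beta> \<mu> u \<le> pair_term (am 0 - am b) (u 0) (u b)"
    have pos: "\<sigma>^2 * S^2 > 0" using S0 sigma by simp
    have "u_objective K J \<beta> \<mu> u / (\<sigma>^2 * S^2) \<le> pair_term (am 0 - am b) (u 0) (u b) / (\<sigma>^2 * S^2)"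
      using h2 pos by (simp add: divide_right_mono)
    also have "\<dots> = 2 * pair_term (am 0 - am b) (u 0) (u b) / (2 * \<sigma>^2 * S^2)" by simp
    finally show ?thesis using h1 by linarith
  qed
  with c1 show ?thesis unfolding S_def by linarith
qed

lemma cost_nonneg:
  assumes "\<forall>a\<in>{0..K}. \<forall>i\<in>{1..J}. w a i \<ge> 0"
  shows "cost \<sigma> K J w \<mu> lam \<ge> 0"
  unfolding cost_def gauss_kl_def using assms by (intro sum_nonneg mult_nonneg_nonneg) auto

lemma inner_val_cost: "inner_val \<sigma> K J \<beta> \<mu> w = (INF lam\<in>Alt K J \<beta> \<mu>. cost \<sigma> K J w \<mu> lam)"
  unfolding inner_val_def cost_def by simp

lemma upper:
  fixes \<beta> :: "nat \<Rightarrow> real" and w \<mu> :: "nat \<Rightarrow> nat \<Rightarrow> real"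
  assumes sigma: "\<sigma> > 0" and S: "(\<Sum>j\<in>{1..J}. \<bar>\<beta> j\<bar>) > 0" and K: "K \<ge> 1"
    and muL: "\<mu> \<in> Lset K J \<beta>" and w: "w \<in> C_active K J"
  shows "inner_val \<sigma> K J \<beta> \<mu> w \<le> u_objective K J \<beta> \<mu> (\<lambda>a. \<Sum>i\<in>{1..J}. w a i) / (\<sigma>^2 * (\<Sum>j\<in>{1..J}. \<bar>\<beta> j\<bar>)^2)"
proof (rule field_le_epsilon)
  fix \<epsilon> :: real assume e: "\<epsilon> > 0"
  define W where "W a = (\<Sum>i\<in>{1..J}. w a i)" for a
  have wnn: "\<forall>a\<in>{0..K}. \<forall>i\<in>{1..J}. w a i \<ge> 0" using w unfolding C_active_def by auto
  define A where "A = (\<lambda>b. pair_term (arm_mean J \<beta> \<mu> 0 - arm_mean J \<beta> \<mu> b) (W 0) (W b)) ` {1..K}"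
  have "Min A \<in> A" unfolding A_def using K by (intro Min_in) auto
  then obtain b where b: "b \<in> {1..K}" and bm: "Min A = pair_term (arm_mean J \<beta> \<mu> 0 - arm_mean J \<beta> \<mu> b) (W 0) (W b)"
    unfolding A_def by auto
  have obj: "u_objective K J \<beta> \<mu> W = Min A" unfolding u_objective_def A_def by simp
  obtain lam where lam: "lam \<in> Alt K J \<beta> \<mu>" and lc: "cost \<sigma> K J w \<mu> lam \<le>
     pair_term (arm_mean J \<beta> \<mu> 0 - arm_mean J \<beta> \<mu> b) (W 0) (W b)
       / (\<sigma>^2 * (\<Sum>j\<in>{1..J}. \<bar>\<beta> j\<bar>)^2) + \<epsilon>"
    using alt_construct[OF sigma S muL b wnn e] unfolding W_def by blast
  have "inner_val \<sigma> K J \<beta> \<mu> w \<le> cost \<sigma> K J w \<mu> lam"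
    unfolding inner_val_cost
  proof (rule cINF_lower[OF _ lam])
    show "bdd_below (cost \<sigma> K J w \<mu> ` Alt K J \<beta> \<mu>)"
      using cost_nonneg[OF wnn] by (intro bdd_belowI[where m=0]) auto
  qed
  then show "inner_val \<sigma> K J \<beta> \<mu> w \<le> u_objective K J \<beta> \<mu> (\<lambda>a. \<Sum>i\<in>{1..J}. w a i) / (\<sigma>^2 * (\<Sum>j\<in>{1..J}. \<bar>\<beta> j\<bar>)^2) + \<epsilon>"
    using lc obj bm unfolding W_def by simp
qed

lemma opt_from:
  assumes "w \<in> C" "C \<subseteq> C_active K J"
    and "\<forall>w'\<in>C_active K J. inner_val \<sigma> K J \<beta> \<mu> w' \<le> inner_val \<sigma> K J \<beta> \<mu> w"
  shows "optimal_weights \<sigma> K J \<beta> \<mu> C w"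
  using assms unfolding optimal_weights_def by auto

theorem proposition3:
  fixes K J :: nat and \<sigma> :: real
    and \<mu> :: "nat \<Rightarrow> nat \<Rightarrow> real" and \<beta> \<alpha> u :: "nat \<Rightarrow> real"
  assumes K: "K \<ge> 1"
    and sigma: "\<sigma> > 0"
    and alpha: "\<alpha> \<in> simplex_pops J"
    and muL: "\<mu> \<in> Lset K J \<beta>"
    and beta_nz: "\<exists>i\<in>{1..J}. \<beta> i \<noteq> 0"
    and u_arg: "u \<in> simplex_arms K"
    and u_max: "\<forall>u'\<in>simplex_arms K. u_objective K J \<beta> \<mu> u' \<le> u_objective K J \<beta> \<mu> u"
  shows "optimal_weights \<sigma> K J \<beta> \<mu> (C_active K J)
           (\<lambda>a i. u a * \<bar>\<beta> i\<bar> / (\<Sum>j\<in>{1..J}. \<bar>\<beta> j\<bar>))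
       \<and> ((\<forall>i\<in>{1..J}. \<alpha> i = \<beta> i) \<longrightarrow>
            optimal_weights \<sigma> K J \<beta> \<mu> (C_agnostic K J \<alpha>)
              (\<lambda>a i. u a * \<bar>\<beta> i\<bar> / (\<Sum>j\<in>{1..J}. \<bar>\<beta> j\<bar>))
          \<and> optimal_weights \<sigma> K J \<beta> \<mu> (C_prop K J \<alpha>)
              (\<lambda>a i. u a * \<bar>\<beta> i\<bar> / (\<Sum>j\<in>{1..J}. \<bar>\<beta> j\<bar>)))"
proof -
  define S where "S = (\<Sum>j\<in>{1..J}. \<bar>\<beta> j\<bar>)"
  define ws where "ws = (\<lambda>a i. u a * \<bar>\<beta> i\<bar> / S)"
  have Spos: "(\<Sum>j\<in>{1..J}. \<bar>\<beta> j\<bar>) > 0"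
  proof -
    obtain i where "i \<in> {1..J}" "\<beta> i \<noteq> 0" using beta_nz by blast
    then show ?thesis by (intro sum_pos2[of _ i]) auto
  qed
  have S0: "S > 0" using Spos S_def by simp
  have unn: "\<forall>a\<in>{0..K}. u a \<ge> 0" and usum: "(\<Sum>a\<in>{0..K}. u a) = 1"
    using u_arg unfolding simplex_arms_def by auto
  define v where "v a = 1 / real (K + 1)" for a :: nat
  have v: "v \<in> simplex_arms K" unfolding simplex_arms_def v_def by simp
  have vpos: "u_objective K J \<beta> \<mu> v > 0"
    unfolding u_objective_def
  proof (subst Min_gr_iff)
    show "finite ((\<lambda>b. pair_term (arm_mean J \<beta> \<mu> 0 - arm_mean J \<beta> \<mu> b) (v 0) (v b)) ` {1..K})" by simp
    show "(\<lambda>b. pair_term (arm_mean J \<beta> \<mu> 0 - arm_mean J \<beta> \<mu> b) (v 0) (v b)) ` {1..K} \<noteq> {}" using K by auto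
    show "\<forall>x\<in>(\<lambda>b. pair_term (arm_mean J \<beta> \<mu> 0 - arm_mean J \<beta> \<mu> b) (v 0) (v b)) ` {1..K}. 0 < x"
    proof
      fix x assume "x \<in> (\<lambda>b. pair_term (arm_mean J \<beta> \<mu> 0 - arm_mean J \<beta> \<mu> b) (v 0) (v b)) ` {1..K}"
      then obtain b where b: "b \<in> {1..K}" and x: "x = pair_term (arm_mean J \<beta> \<mu> 0 - arm_mean J \<beta> \<mu> b) (v 0) (v b)" by auto
      have "arm_mean J \<beta> \<mu> 0 - arm_mean J \<beta> \<mu> b \<noteq> 0" using muL b unfolding Lset_def by auto
      then show "0 < x" unfolding x pair_term_def v_def by simp
    qed
  qed
  have upos: "u_objective K J \<beta> \<mu> u > 0" using u_max v vpos by force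
  have ubp: "u 0 > 0 \<and> u b > 0" if b: "b \<in> {1..K}" for b
  proof -
    have "u_objective K J \<beta> \<mu> u \<le> pair_term (arm_mean J \<beta> \<mu> 0 - arm_mean J \<beta> \<mu> b) (u 0) (u b)"
      unfolding u_objective_def using b by (intro Min_le) auto
    then have "pair_term (arm_mean J \<beta> \<mu> 0 - arm_mean J \<beta> \<mu> b) (u 0) (u b) > 0" using upos by linarith
    then show ?thesis unfolding pair_term_def by (auto split: if_splits)
  qed
  have u0: "u 0 > 0" using ubp[of 1] K by auto
  have ub: "\<forall>b\<in>{1..K}. u b > 0" using ubp by blast
  define V where "V = u_objective K J \<beta> \<mu> u / (\<sigma>^2 * S^2)"
  have wsnn: "\<forall>a\<in>{0..K}. \<forall>i\<in>{1..J}. ws a i \<ge> 0" unfolding ws_def using unn S0 by auto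
  have lowerb: "inner_val \<sigma> K J \<beta> \<mu> ws \<ge> V"
  proof -
    have 1: "(1::nat) \<in> {1..K}" using K by simp
    obtain lam0 where "lam0 \<in> Alt K J \<beta> \<mu>"
      using alt_construct[OF sigma Spos muL 1 wsnn, of 1] by auto
    then have ne: "Alt K J \<beta> \<mu> \<noteq> {}" by auto
    show ?thesis unfolding inner_val_cost
    proof (rule cINF_greatest[OF ne])
      fix lam assume "lam \<in> Alt K J \<beta> \<mu>"
      then show "V \<le> cost \<sigma> K J ws \<mu> lam"
        using alt_lower[OF sigma Spos muL _ unn u0 ub] unfolding V_def ws_def S_def by blast
    qed
  qed
  have allw: "\<forall>w'\<in>C_active K J. inner_val \<sigma> K J \<beta> \<mu> w' \<le> inner_val \<sigma> K J \<beta> \<mu> ws"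
  proof
    fix w' assume w': "w' \<in> C_active K J"
    define W where "W a = (\<Sum>i\<in>{1..J}. w' a i)" for a
    have "W \<in> simplex_arms K" using w' unfolding W_def simplex_arms_def C_active_def
      by (auto intro: sum_nonneg)
    then have "u_objective K J \<beta> \<mu> W \<le> u_objective K J \<beta> \<mu> u" using u_max by blast
    then have "u_objective K J \<beta> \<mu> W / (\<sigma>^2 * S^2) \<le> V" unfolding V_def using S0 sigma
      by (simp add: divide_right_mono)
    moreover have "inner_val \<sigma> K J \<beta> \<mu> w' \<le> u_objective K J \<beta> \<mu> W / (\<sigma>^2 * S^2)"
      using upper[OF sigma Spos K muL w'] unfolding W_def S_def .
    ultimately show "inner_val \<sigma> K J \<beta> \<mu> w' \<le> inner_val \<sigma> K J \<beta> \<mu> ws" using lowerb by linarith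
  qed
  have wsA: "ws \<in> C_active K J"
  proof -
    have "(\<Sum>a\<in>{0..K}. \<Sum>i\<in>{1..J}. ws a i) = (\<Sum>a\<in>{0..K}. u a * S / S)"
      unfolding ws_def S_def by (simp add: sum_distrib_left[symmetric] sum_divide_distrib[symmetric])
    also have "\<dots> = 1" using S0 usum by simp
    finally show ?thesis using wsnn unfolding C_active_def by auto
  qed
  have part1: "optimal_weights \<sigma> K J \<beta> \<mu> (C_active K J) ws" by (rule opt_from[OF wsA _ allw]) simp
  have part2: "optimal_weights \<sigma> K J \<beta> \<mu> (C_agnostic K J \<alpha>) ws \<and> optimal_weights \<sigma> K J \<beta> \<mu> (C_prop K J \<alpha>) ws"
    if ab: "\<forall>i\<in>{1..J}. \<alpha> i = \<beta> i"
  proof -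
    have ann: "\<forall>i\<in>{1..J}. \<alpha> i \<ge> 0" and asum: "(\<Sum>i\<in>{1..J}. \<alpha> i) = 1"
      using alpha unfolding simplex_pops_def by auto
    have S1: "S = 1"
    proof -
      have "S = (\<Sum>i\<in>{1..J}. \<alpha> i)" unfolding S_def using ab ann by (intro sum.cong) auto
      then show ?thesis using asum by simp
    qed
    have wsa: "ws a i = \<alpha> i * u a" if "i \<in> {1..J}" for a i
      unfolding ws_def S1 using ab ann that by auto
    have agsub: "C_agnostic K J \<alpha> \<subseteq> C_active K J"
    proof
      fix w assume "w \<in> C_agnostic K J \<alpha>"
      then obtain u' where u': "u' \<in> simplex_arms K" and wu: "\<forall>a\<in>{0..K}. \<forall>i\<in>{1..J}. w a i = \<alpha> i * u' a"
        unfolding C_agnostic_def by auto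
      have u'nn: "\<forall>a\<in>{0..K}. u' a \<ge> 0" and u'sum: "(\<Sum>a\<in>{0..K}. u' a) = 1"
        using u' unfolding simplex_arms_def by auto
      have "(\<Sum>a\<in>{0..K}. \<Sum>i\<in>{1..J}. w a i) = (\<Sum>a\<in>{0..K}. u' a * (\<Sum>i\<in>{1..J}. \<alpha> i))"
        using wu by (intro sum.cong) (auto simp: sum_distrib_left mult.commute)
      also have "\<dots> = 1" using asum u'sum by simp
      finally show "w \<in> C_active K J" unfolding C_active_def using wu u'nn ann by auto
    qed
    have wsag: "ws \<in> C_agnostic K J \<alpha>" unfolding C_agnostic_def using u_arg wsa by auto
    have "(\<Sum>a\<in>{0..K}. ws a i) = \<alpha> i" if "i \<in> {1..J}" for i
    proof -
      have "(\<Sum>a\<in>{0..K}. ws a i) = (\<Sum>a\<in>{0..K}. \<alpha> i * u a)" using wsa that by simp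
      also have "\<dots> = \<alpha> i" using usum by (simp add: sum_distrib_left[symmetric])
      finally show ?thesis .
    qed
    then have wsp: "ws \<in> C_prop K J \<alpha>" unfolding C_prop_def using wsA by auto
    have "C_prop K J \<alpha> \<subseteq> C_active K J" unfolding C_prop_def by auto
    then show ?thesis using opt_from[OF wsag agsub allw] opt_from[OF wsp _ allw] by auto
  qed
  show ?thesis using part1 part2 unfolding ws_def S_def by blast
qed

end
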